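(* Let $V$ be a space which is not CM. Then $V$ has only finitely many rational angles.
   Context: A space is a $2$-dimensional $\mathbb{Q}$-vector subspace $V\subset\mathbb{C}$ containing two $\mathbb{R}$-linearly independent vectors. $V$ is CM if there is $\lambda\in\mathbb{C}\setminus\mathbb{Q}$ with $\lambda V\subseteq V$. A rational angle of $V$ is an ordered pair of distinct lines through $0$, $(\mathbb{R}v_1,\mathbb{R}v_2)$ with $v_1,v_2\in V\setminus\{0\}$, $v_2/v_1\notin\mathbb{R}$, such that $\arg(v_2/v_1)$ is a rational multiple of $\pi$. *)

theory Defs
  imports "HOL-Analysis.Analysis"
begin

definition Q_subspace_dim2 :: "complex set \<Rightarrow> bool" where
  "Q_subspace_dim2 V \<longleftrightarrow>
     (\<exists>a b. V = {of_rat p * a + of_rat q * b | p q. True} \<and>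
            (\<forall>p q. of_rat p * a + of_rat q * b = 0 \<longrightarrow> p = 0 \<and> q = 0))"

definition is_space :: "complex set \<Rightarrow> bool" where
  "is_space V \<longleftrightarrow> Q_subspace_dim2 V \<and>
     (\<exists>v\<in>V. \<exists>w\<in>V. \<forall>r s::real. of_real r * v + of_real s * w = 0 \<longrightarrow> r = 0 \<and> s = 0)"

definition is_CM :: "complex set \<Rightarrow> bool" where
  "is_CM V \<longleftrightarrow> (\<exists>l. l \<notin> \<rat> \<and> (\<lambda>x. l * x) ` V \<subseteq> V)"

definition rline :: "complex \<Rightarrow> complex set" where
  "rline v = {of_real t * v | t. True}"

definition rational_angles :: "complex set \<Rightarrow> (complex set \<times> complex set) set" where
  "rational_angles V = {(rline v1, rline v2) | v1 v2.
      v1 \<in> V - {0} \<and> v2 \<in> V - {0} \<and> v2 / v1 \<notin> \<real> \<and>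
      (\<exists>q\<in>\<rat>. Arg (v2 / v1) = q * pi)}"

end

theory Submission
  imports Defs "Berlekamp_Zassenhaus.Factor_Bound"
begin


interpretation rat_c_hom: map_poly_idom_hom "of_rat :: rat \<Rightarrow> complex" by unfold_locales

lemma prod_list_all_one: "(\<forall>a\<in>set xs. f a = (1::real)) \<Longrightarrow> (\<Prod>a\<leftarrow>xs. f a) = 1"
  by (induct xs) auto

lemma int_poly_finite_bounded:
  "finite {g::int poly. g \<noteq> 0 \<and> degree g \<le> D \<and> (\<forall>k. \<bar>Polynomial.coeff g k\<bar> \<le> C)}"
proof -
  have "{g::int poly. g \<noteq> 0 \<and> degree g \<le> D \<and> (\<forall>k. \<bar>Polynomial.coeff g k\<bar> \<le> C)}
     \<subseteq> Poly ` {xs. set xs \<subseteq> {-C..C} \<and> length xs \<le> Suc D}"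
  proof
    fix g :: "int poly" assume g: "g \<in> {g::int poly. g \<noteq> 0 \<and> degree g \<le> D \<and> (\<forall>k. \<bar>Polynomial.coeff g k\<bar> \<le> C)}"
    have "set (coeffs g) \<subseteq> {-C..C}"
    proof
      fix c assume "c \<in> set (coeffs g)"
      then obtain i where "i < length (coeffs g)" "c = coeffs g ! i" by (metis in_set_conv_nth)
      then have "c = Polynomial.coeff g i" using nth_coeffs_coeff by metis
      moreover have "\<bar>Polynomial.coeff g i\<bar> \<le> C" using g by blast
      ultimately show "c \<in> {-C..C}" by (auto simp: abs_le_iff)
    qed
    moreover have "length (coeffs g) \<le> Suc D" using g length_coeffs_degree[of g] by auto
    ultimately show "g \<in> Poly ` {xs. set xs \<subseteq> {-C..C} \<and> length xs \<le> Suc D}"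
      by (intro image_eqI[of _ _ "coeffs g"]) auto
  qed
  moreover have "finite (Poly ` {xs. set xs \<subseteq> {-C..C} \<and> length xs \<le> Suc D})"
    by (intro finite_imageI finite_lists_length_le) auto
  ultimately show ?thesis by (rule finite_subset)
qed

lemma kronecker_finite:
  "finite {w::complex. (\<exists>n>0. w^n = 1) \<and>
      (\<exists>p::rat poly. p \<noteq> 0 \<and> degree p \<le> D \<and> poly (map_poly of_rat p) w = 0)}"
proof -
  define G where "G = {g::int poly. g \<noteq> 0 \<and> degree g \<le> D \<and> (\<forall>k. \<bar>Polynomial.coeff g k\<bar> \<le> 2^D)}"
  have finG: "finite G" unfolding G_def by (rule int_poly_finite_bounded)
  have finZ: "finite (\<Union>g\<in>G. {w::complex. poly (of_int_poly g) w = 0})"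
  proof (intro finite_UN_I finG)
    fix g assume "g \<in> G"
    then have "(of_int_poly g :: complex poly) \<noteq> 0" unfolding G_def by auto
    then show "finite {w::complex. poly (of_int_poly g) w = 0}" by (rule poly_roots_finite)
  qed
  have "{w::complex. (\<exists>n>0. w^n = 1) \<and>
      (\<exists>p::rat poly. p \<noteq> 0 \<and> degree p \<le> D \<and> poly (map_poly of_rat p) w = 0)}
      \<subseteq> (\<Union>g\<in>G. {w::complex. poly (of_int_poly g) w = 0})"
  proof
    fix w :: complex
    assume "w \<in> {w::complex. (\<exists>n>0. w^n = 1) \<and>
      (\<exists>p::rat poly. p \<noteq> 0 \<and> degree p \<le> D \<and> poly (map_poly of_rat p) w = 0)}"
    then obtain n p where n: "n > 0" "w^n = 1" and p: "p \<noteq> 0" "degree p \<le> D"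
      "poly (map_poly of_rat p) w = 0" by auto
    define fI :: "int poly" where "fI = Polynomial.monom 1 n - 1"
    define f :: "rat poly" where "f = Polynomial.monom 1 n - 1"
    have fIf: "of_int_poly fI = f" unfolding fI_def f_def by (simp add: hom_distribs)
    have fI0: "fI \<noteq> 0" using n unfolding fI_def
      by (metis degree_1 degree_monom_eq diff_eq_eq monom_eq_1_iff one_neq_zero add_0 not_gr0 zero_neq_one)
    have fw: "poly (map_poly of_rat f) w = 0" unfolding f_def using n by (simp add: hom_distribs poly_monom)
    define h where "h = gcd p f"
    have h0: "h \<noteq> 0" unfolding h_def using p by simp
    have hdeg: "degree h \<le> D" using dvd_imp_degree_le[of h p] p unfolding h_def by simp
    have hw: "poly (map_poly of_rat h) w = 0"
    proof -
      have "h = fst (bezout_coefficients p f) * p + snd (bezout_coefficients p f) * f"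
        unfolding h_def by (simp add: bezout_coefficients_fst_snd)
      then show ?thesis using fw p(3) by (simp add: hom_distribs)
    qed
    have "h dvd f" unfolding h_def by simp
    then obtain k where fk: "f = h * k" by (elim dvdE)
    obtain r hg where rh: "rat_to_normalized_int_poly h = (r, hg)" by force
    note rhs = rat_to_normalized_int_poly[OF rh]
    from rat_to_int_factor_explicit[OF _ rh, of fI k] fIf fk
    obtain r' where "fI = hg * Polynomial.smult (Polynomial.content fI) r'" by auto
    then have hgdvd: "hg dvd fI" by (metis dvd_triv_left)
    have hg0: "hg \<noteq> 0" using rhs(1) h0 by auto
    have hgdeg: "degree hg \<le> D" using rhs(4) hdeg by simp
    have hgw: "poly (of_int_poly hg) w = 0"
    proof -
      have "map_poly of_rat h = Polynomial.smult (of_rat r) (of_int_poly hg :: complex poly)"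
        by (subst rhs(1)) (simp add: hom_distribs map_poly_map_poly o_def)
      then show ?thesis using hw rhs(2) by simp
    qed
    have roots1: "cmod a = 1" if "poly (of_int_poly hg) a = 0" for a :: complex
    proof -
      from hgdvd obtain q where "fI = hg * q" by (elim dvdE)
      then have "poly (of_int_poly fI) a = 0" using that by (simp add: hom_distribs)
      then have "a ^ n = 1" unfolding fI_def by (simp add: hom_distribs poly_monom)
      then have "cmod a ^ n = 1" by (metis norm_one norm_power)
      then have "cmod a ^ n = 1 ^ n" by simp
      then show ?thesis using power_eq_imp_eq_base[OF _ norm_ge_zero zero_le_one n(1)] by blast
    qed
    have lead1: "\<bar>lead_coeff hg\<bar> = 1"
    proof -
      from hgdvd obtain q where q: "fI = hg * q" by (elim dvdE)
      have "degree fI = n" unfolding fI_def using n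
        using degree_add_eq_left[of "-1" "Polynomial.monom (1::int) n"]
        by (simp add: degree_monom_eq)
      then have "lead_coeff fI = 1" unfolding fI_def using n
        by (simp add: coeff_monom)
      then have "lead_coeff hg * lead_coeff q = 1" using q by (simp add: lead_coeff_mult)
      then show ?thesis by (metis zmult_eq_1_iff abs_1 abs_neg_one)
    qed
    have mm: "mahler_measure hg = 1"
    proof -
      have "\<forall>a\<in>set (complex_roots_complex (of_int_poly hg)). max 1 (cmod a) = 1"
      proof
        fix a assume a: "a \<in> set (complex_roots_complex (of_int_poly hg))"
        have "poly (of_int_poly hg :: complex poly) a = 0"
          apply (subst complex_roots(1)[symmetric])
          using a by (simp add: poly_prod_list prod_list_zero_iff)
        then show "max 1 (cmod a) = 1" using roots1 by simp
      qed
      then have "(\<Prod>a\<leftarrow>complex_roots_complex (of_int_poly hg). max 1 (cmod a)) = 1"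
        by (rule prod_list_all_one)
      then show ?thesis unfolding mahler_measure_def mahler_measure_poly_def using lead1
        by simp
    qed
    have "\<forall>k. \<bar>Polynomial.coeff hg k\<bar> \<le> 2^D"
    proof
      fix k
      have "real_of_int \<bar>Polynomial.coeff hg k\<bar> \<le> real (degree hg choose k)"
        using Mignotte_bound[of hg k] mm by simp
      also have "\<dots> \<le> 2 ^ degree hg" by (simp add: binomial_le_pow2)
      also have "\<dots> \<le> 2 ^ D" using hgdeg by simp
      finally have "real_of_int \<bar>Polynomial.coeff hg k\<bar> \<le> real_of_int (2^D)" by simp
      then show "\<bar>Polynomial.coeff hg k\<bar> \<le> 2^D" by (simp only: of_int_le_iff)
    qed
    then have "hg \<in> G" unfolding G_def using hg0 hgdeg by auto
    then show "w \<in> (\<Union>g\<in>G. {w::complex. poly (of_int_poly g) w = 0})" using hgw by auto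
  qed
  then show ?thesis using finZ by (rule finite_subset)
qed


interpretation Qv: vector_space "\<lambda>(r::rat) (z::complex). of_rat r * z"
  by unfold_locales (simp_all add: algebra_simps of_rat_add of_rat_mult)

lemma Qv_mult_gen:
  assumes mc: "\<And>x y. x \<in> G \<Longrightarrow> y \<in> G \<Longrightarrow> x * y \<in> G"
    and x: "x \<in> G" and y: "y \<in> Qv.span G"
  shows "x * y \<in> Qv.span G"
  using y
proof (induct rule: Qv.span_induct_alt)
  case base then show ?case by (simp add: Qv.span_zero)
next
  case (step c g z)
  have "x * (of_rat c * g + z) = of_rat c * (x * g) + x * z" by (simp add: algebra_simps)
  moreover have "x * g \<in> Qv.span G" using mc[OF x step(1)] by (rule Qv.span_base)
  ultimately show ?case using step(2) by (metis Qv.span_add Qv.span_scale)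
qed

lemma Qv_mult_closed:
  assumes mc: "\<And>x y. x \<in> G \<Longrightarrow> y \<in> G \<Longrightarrow> x * y \<in> G"
    and x: "x \<in> Qv.span G" and y: "y \<in> Qv.span G"
  shows "x * y \<in> Qv.span G"
  using x
proof (induct rule: Qv.span_induct_alt)
  case base then show ?case by (simp add: Qv.span_zero)
next
  case (step c g z)
  have "(of_rat c * g + z) * y = of_rat c * (g * y) + z * y" by (simp add: algebra_simps)
  moreover have "g * y \<in> Qv.span G" using Qv_mult_gen[OF mc step(1) y] .
  ultimately show ?case using step(2) by (metis Qv.span_add Qv.span_scale)
qed

lemma Qv_power_closed:
  assumes mc: "\<And>x y. x \<in> G \<Longrightarrow> y \<in> G \<Longrightarrow> x * y \<in> G" and one: "1 \<in> G"
    and x: "x \<in> Qv.span G"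
  shows "x ^ n \<in> Qv.span G"
proof (induct n)
  case 0 then show ?case using one by (simp add: Qv.span_base)
next
  case (Suc n) then show ?case using Qv_mult_closed[OF mc x] by simp
qed

lemma dep_family:
  assumes fin: "finite G" and E: "\<And>j. j \<le> D \<Longrightarrow> E j \<in> Qv.span G" and card: "card G \<le> D"
  shows "\<exists>c::nat \<Rightarrow> rat. (\<exists>j\<le>D. c j \<noteq> 0) \<and> (\<Sum>j\<le>D. of_rat (c j) * E j) = 0"
proof (cases "inj_on E {..D}")
  case False
  then obtain j k where jk: "j \<le> D" "k \<le> D" "j \<noteq> k" "E j = E k"
    unfolding inj_on_def by auto
  define c :: "nat \<Rightarrow> rat" where "c = (\<lambda>i. (if i = j then 1 else 0) - (if i = k then 1 else 0))"
  have "(\<Sum>i\<le>D. of_rat (c i) * E i) = (\<Sum>i\<le>D. (if i = j then E i else 0)) - (\<Sum>i\<le>D. (if i = k then E i else 0))"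
  proof -
    have "\<And>i. of_rat (c i) * E i = (if i = j then E i else 0) - (if i = k then E i else 0)"
      unfolding c_def using jk(3) by auto
    then show ?thesis by (simp add: sum_subtractf)
  qed
  also have "\<dots> = 0" using jk by simp
  finally show ?thesis using jk by (intro exI[of _ c]) (auto simp: c_def)
next
  case True
  define S where "S = E ` {..D}"
  have cardS: "card S = Suc D" unfolding S_def using True by (simp add: card_image)
  have "S \<subseteq> Qv.span G" unfolding S_def using E by auto
  then have "Qv.dependent S"
    using Qv.independent_span_bound[OF fin, of S] cardS card by auto
  then obtain T u where T: "finite T" "T \<subseteq> S" "(\<Sum>v\<in>T. of_rat (u v) * v) = 0" "\<exists>v\<in>T. u v \<noteq> 0"
    unfolding Qv.dependent_explicit by blast
  define c where "c = (\<lambda>i. if E i \<in> T then u (E i) else 0)"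
  have "(\<Sum>i\<le>D. of_rat (c i) * E i) = (\<Sum>i\<in>{i. i \<le> D \<and> E i \<in> T}. of_rat (u (E i)) * E i)"
    unfolding c_def by (rule sum.mono_neutral_cong_right) auto
  also have "\<dots> = (\<Sum>v\<in>T. of_rat (u v) * v)"
  proof -
    have "T = E ` {i. i \<le> D \<and> E i \<in> T}" using T(2) unfolding S_def by auto
    moreover have "inj_on E {i. i \<le> D \<and> E i \<in> T}" using True by (rule inj_on_subset) auto
    ultimately show ?thesis using sum.reindex[of E "{i. i \<le> D \<and> E i \<in> T}" "\<lambda>v. of_rat (u v) * v"]
      by (simp add: o_def)
  qed
  also have "\<dots> = 0" using T(3) .
  finally have "(\<Sum>i\<le>D. of_rat (c i) * E i) = 0" .
  moreover obtain v where "v \<in> T" "u v \<noteq> 0" using T(4) by blast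
  moreover then obtain i where "i \<le> D" "E i = v" using T(2) unfolding S_def by auto
  ultimately show ?thesis by (intro exI[of _ c]) (auto simp: c_def)
qed


lemma geom_inv_aux:
  fixes w :: complex
  shows "(w - 1) * (\<Sum>j<m. of_nat j * w^j) = of_nat m * w^m - (\<Sum>j<m. w^(Suc j))"
proof (induct m)
  case 0 then show ?case by simp
next
  case (Suc m)
  have "(w - 1) * (\<Sum>j<Suc m. of_nat j * w^j) = (w - 1) * (\<Sum>j<m. of_nat j * w^j) + (w - 1) * (of_nat m * w^m)"
    by (simp add: algebra_simps)
  also have "\<dots> = of_nat (Suc m) * w^(Suc m) - (\<Sum>j<Suc m. w^(Suc j))"
    using Suc by (simp add: algebra_simps)
  finally show ?case .
qed

lemma geom_inv:
  fixes w :: complex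
  assumes "w^m = 1" "w \<noteq> 1"
  shows "(w - 1) * (\<Sum>j<m. of_nat j * w^j) = of_nat m"
proof -
  have "(\<Sum>j<m. w^(Suc j)) = w * (\<Sum>j<m. w^j)" by (simp add: sum_distrib_left)
  also have "(\<Sum>j<m. w^j) = 0" using assms by (simp add: sum_gp_strict)
  finally show ?thesis using geom_inv_aux[of w m] assms by simp
qed

lemma cot_finite:
  fixes U T :: "complex set"
  assumes U: "finite U" and TU: "T \<subseteq> Qv.span U"
    and Tw: "\<And>t. t \<in> T \<Longrightarrow> \<exists>w. (\<exists>n>0. w^n = 1) \<and> w \<noteq> 1 \<and> t = \<i> * (w + 1) / (w - 1)"
  shows "finite T"
proof -
  obtain B where B: "B \<subseteq> T" "Qv.independent B" "T \<subseteq> Qv.span B"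
    using Qv.maximal_independent_subset by blast
  have finB: "finite B" using Qv.independent_span_bound[OF U B(2)] B(1) TU by auto
  from Tw B(1) have "\<forall>b\<in>B. \<exists>m w. m > 0 \<and> w^m = 1 \<and> w \<noteq> 1 \<and> b = \<i> * (w + 1) / (w - 1)" by blast
  then obtain m W where mW: "\<And>b. b \<in> B \<Longrightarrow> m b > 0 \<and> W b ^ m b = 1 \<and> W b \<noteq> 1 \<and> b = \<i> * (W b + 1) / (W b - 1)"
    by metis
  define M where "M = 4 * (\<Prod>b\<in>B. m b)"
  have M0: "M > 0" using mW finB unfolding M_def by (simp add: prod_pos)
  define G where "G = {z::complex. z^M = 1}"
  have finG: "finite G" unfolding G_def using M0 by (intro finite_roots_unity) auto
  have mc: "\<And>x y. x \<in> G \<Longrightarrow> y \<in> G \<Longrightarrow> x * y \<in> G" unfolding G_def by (simp add: power_mult_distrib)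
  have oneG: "1 \<in> G" unfolding G_def by simp
  have iG: "\<i> \<in> G"
  proof -
    have "\<i> ^ M = (\<i> ^ 4) ^ (\<Prod>b\<in>B. m b)" unfolding M_def by (simp add: power_mult)
    also have "\<dots> = 1" by simp
    finally show ?thesis unfolding G_def by simp
  qed
  have WG: "W b \<in> G" if b: "b \<in> B" for b
  proof -
    have "m b dvd M" unfolding M_def using finB b by (simp add: dvd_prodI)
    then obtain k where "M = m b * k" by (elim dvdE)
    then have "W b ^ M = (W b ^ m b) ^ k" by (simp add: power_mult)
    then show ?thesis unfolding G_def using mW[OF b] by simp
  qed
  have powG: "w ^ j \<in> G" if "w \<in> G" for w j
  proof -
    have "(w ^ j) ^ M = (w ^ M) ^ j" by (simp add: power_mult[symmetric] mult.commute)
    then show ?thesis using that unfolding G_def by simp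
  qed
  have BK: "b \<in> Qv.span G" if b: "b \<in> B" for b
  proof -
    let ?w = "W b" and ?m = "m b"
    define S where "S = (\<Sum>j<?m. of_nat j * ?w^j)"
    have S: "(?w - 1) * S = of_nat ?m" unfolding S_def using geom_inv mW[OF b] by blast
    have w1: "?w - 1 \<noteq> 0" using mW[OF b] by simp
    have "b = \<i> * (?w + 1) * (of_rat (1 / of_nat ?m) * S)"
    proof -
      have "b = \<i> * (?w + 1) / (?w - 1)" using mW[OF b] by simp
      moreover have "1 / (?w - 1) = of_rat (1 / of_nat ?m) * S"
        using S w1 mW[OF b] by (simp add: field_simps of_rat_divide)
      ultimately show ?thesis by (metis times_divide_eq_right mult.assoc mult_1_right)
    qed
    moreover have "S \<in> Qv.span G"
    proof -
      have "of_nat j * ?w^j = of_rat (of_nat j) * ?w^j" for j by simp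
      then have "S = (\<Sum>j<?m. of_rat (of_nat j) * ?w^j)" unfolding S_def by simp
      moreover have "(\<Sum>j<?m. of_rat (of_nat j) * ?w^j) \<in> Qv.span G"
        by (intro Qv.span_sum Qv.span_scale Qv.span_base powG WG b)
      ultimately show ?thesis by simp
    qed
    moreover have "\<i> \<in> Qv.span G" using iG by (rule Qv.span_base)
    moreover have "?w + 1 \<in> Qv.span G" using WG[OF b] oneG by (intro Qv.span_add Qv.span_base)
    ultimately show ?thesis using Qv_mult_closed[OF mc] Qv.span_scale by metis
  qed
  have TK: "T \<subseteq> Qv.span G"
  proof -
    have "Qv.span B \<subseteq> Qv.span G" using BK by (intro Qv.span_minimal) auto
    then show ?thesis using B(3) by blast
  qed
  define D where "D = card G"
  have "T \<subseteq> (\<lambda>w. \<i> * (w + 1) / (w - 1)) ` {w::complex. (\<exists>n>0. w^n = 1) \<and>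
      (\<exists>p::rat poly. p \<noteq> 0 \<and> degree p \<le> D \<and> poly (map_poly of_rat p) w = 0)}"
  proof
    fix t assume t: "t \<in> T"
    obtain w n where w: "n > 0" "w^n = 1" "w \<noteq> 1" "t = \<i> * (w + 1) / (w - 1)" using Tw[OF t] by blast
    define e where "e = t - \<i>"
    define f where "f = t + \<i>"
    have w1: "w - 1 \<noteq> 0" using w by simp
    have we: "w * e = f"
    proof -
      have "t * (w - 1) = \<i> * (w + 1)" using w(4) w1 by (simp add: field_simps)
      then show ?thesis unfolding e_def f_def by (simp add: algebra_simps)
    qed
    have e0: "e \<noteq> 0"
    proof
      assume "e = 0"
      then have "t = \<i>" unfolding e_def by simp
      then have "\<i> * (w - 1) = \<i> * (w + 1)" using w(4) w1 by (simp add: field_simps)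
      then show False by (simp add: algebra_simps)
    qed
    have tK: "t \<in> Qv.span G" using TK t by blast
    have iK: "\<i> \<in> Qv.span G" using iG by (rule Qv.span_base)
    have eK: "e \<in> Qv.span G" unfolding e_def using tK iK by (rule Qv.span_diff)
    have fK: "f \<in> Qv.span G" unfolding f_def using tK iK by (rule Qv.span_add)
    define E where "E = (\<lambda>j. f^j * e^(D - j))"
    have EK: "E j \<in> Qv.span G" if "j \<le> D" for j
      unfolding E_def using Qv_mult_closed[OF mc] Qv_power_closed[OF mc oneG] eK fK by blast
    have Ew: "E j = w^j * e^D" if "j \<le> D" for j
    proof -
      have "E j = (w * e)^j * e^(D - j)" unfolding E_def we ..
      also have "\<dots> = w^j * (e^j * e^(D - j))" by (simp add: power_mult_distrib)
      also have "e^j * e^(D - j) = e^D" using that by (simp add: power_add[symmetric])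
      finally show ?thesis .
    qed
    have "\<exists>c::nat \<Rightarrow> rat. (\<exists>j\<le>D. c j \<noteq> 0) \<and> (\<Sum>j\<le>D. of_rat (c j) * E j) = 0"
      by (rule dep_family[OF finG EK]) (simp_all add: D_def)
    then obtain c :: "nat \<Rightarrow> rat" where c: "\<exists>j\<le>D. c j \<noteq> 0" "(\<Sum>j\<le>D. of_rat (c j) * E j) = 0"
      by blast
    have "(\<Sum>j\<le>D. of_rat (c j) * w^j) * e^D = (\<Sum>j\<le>D. of_rat (c j) * E j)"
      by (simp add: sum_distrib_right Ew mult.assoc)
    then have cw: "(\<Sum>j\<le>D. of_rat (c j) * w^j) = 0" using c(2) e0 by simp
    define p where "p = (\<Sum>j\<le>D. Polynomial.monom (c j) j)"
    have pc: "Polynomial.coeff p i = (if i \<le> D then c i else 0)" for i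
      unfolding p_def by (simp add: coeff_sum coeff_monom)
    have p0: "p \<noteq> 0" using c(1) pc by (metis coeff_0)
    have pdeg: "degree p \<le> D" using pc by (intro degree_le) auto
    have "poly (map_poly of_rat p) w = (\<Sum>j\<le>D. of_rat (c j) * w^j)"
      unfolding p_def by (simp add: hom_distribs poly_sum poly_monom)
    then have "poly (map_poly of_rat p) w = 0" using cw by simp
    then show "t \<in> (\<lambda>w. \<i> * (w + 1) / (w - 1)) ` {w::complex. (\<exists>n>0. w^n = 1) \<and>
      (\<exists>p::rat poly. p \<noteq> 0 \<and> degree p \<le> D \<and> poly (map_poly of_rat p) w = 0)}"
      using w p0 pdeg by blast
  qed
  then show ?thesis by (rule finite_subset[OF _ finite_imageI[OF kronecker_finite]])
qed

lemma of_real_of_rat_c: "complex_of_real (of_rat q) = of_rat q"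
  by (cases q) (simp add: of_rat_rat)

lemma rline_scale:
  assumes t: "t \<noteq> 0"
  shows "rline (complex_of_real t * u) = rline u"
proof -
  have A: "x \<in> rline u" if xin: "x \<in> rline (complex_of_real t * u)" for x
  proof -
    obtain t' where "x = complex_of_real t' * (complex_of_real t * u)" using xin unfolding rline_def by blast
    then have "x = complex_of_real (t' * t) * u" by simp
    then show ?thesis unfolding rline_def by blast
  qed
  have B: "x \<in> rline (complex_of_real t * u)" if xin: "x \<in> rline u" for x
  proof -
    obtain t' where "x = complex_of_real t' * u" using xin unfolding rline_def by blast
    then have "x = complex_of_real (t' / t) * (complex_of_real t * u)" using t by (simp add: of_real_divide)
    then show ?thesis unfolding rline_def by blast
  qed
  from A B show ?thesis by blast
qed

lemma rline_mult: "rline (c * u) = (\<lambda>x. c * x) ` rline u"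
  unfolding rline_def by (auto simp: algebra_simps)

lemma rline_Rindep:
  assumes "u \<noteq> 0" "u' \<noteq> 0" "rline u \<noteq> rline u'" "complex_of_real r * u + complex_of_real s * u' = 0"
  shows "r = 0 \<and> s = 0"
proof (cases "s = 0")
  case True
  then show ?thesis using assms by simp
next
  case False
  then have u': "u' = complex_of_real (- r / s) * u" using assms(4)
    by (simp add: field_simps of_real_divide) (metis add.commute add_eq_0_iff mult.commute)
  then have "r \<noteq> 0" using assms(2) by auto
  then have "- r / s \<noteq> 0" using False by simp
  then have "rline u' = rline u" by (simp only: u') (rule rline_scale)
  then show ?thesis using assms(3) by simp
qed

definition Vab :: "complex \<Rightarrow> complex \<Rightarrow> complex set" where
  "Vab a b = {of_rat p * a + of_rat q * b | p q. True}"

lemma V_comb: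
  assumes "u \<in> Vab a b" "u' \<in> Vab a b"
  shows "of_rat s * u + of_rat t * u' \<in> Vab a b"
proof -
  obtain p q where u: "u = of_rat p * a + of_rat q * b" using assms(1) unfolding Vab_def by blast
  obtain p' q' where u': "u' = of_rat p' * a + of_rat q' * b" using assms(2) unfolding Vab_def by blast
  have "of_rat s * u + of_rat t * u' = of_rat (s * p + t * p') * a + of_rat (s * q + t * q') * b"
    unfolding u u' by (simp add: of_rat_add of_rat_mult algebra_simps)
  then show ?thesis unfolding Vab_def by blast
qed

lemma rat_solve:
  fixes s p t p' m :: rat
  assumes "d = p * q' - p' * q" "d \<noteq> 0" "s = (m * q' - n * p') / d" "t = (p * n - q * m) / d"
  shows "s * p + t * p' = m" "s * q + t * q' = n"
proof -
  have "s * p + t * p' = ((m * q' - n * p') * p + (p * n - q * m) * p') / d"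
    using assms(3,4) by (simp add: add_divide_distrib)
  also have "(m * q' - n * p') * p + (p * n - q * m) * p' = m * d" unfolding assms(1) by (simp add: algebra_simps)
  finally show "s * p + t * p' = m" using assms(2) by simp
  have "s * q + t * q' = ((m * q' - n * p') * q + (p * n - q * m) * q') / d"
    using assms(3,4) by (simp add: add_divide_distrib)
  also have "(m * q' - n * p') * q + (p * n - q * m) * q' = n * d" unfolding assms(1) by (simp add: algebra_simps)
  finally show "s * q + t * q' = n" using assms(2) by simp
qed

lemma V_basis:
  assumes "u \<in> Vab a b" "u' \<in> Vab a b"
    and ind: "\<And>r s. complex_of_real r * u + complex_of_real s * u' = 0 \<Longrightarrow> r = 0 \<and> s = 0"
    and v: "v \<in> Vab a b"
  shows "\<exists>s t. v = of_rat s * u + of_rat t * u'"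
proof -
  obtain p q where u: "u = of_rat p * a + of_rat q * b" using assms(1) unfolding Vab_def by blast
  obtain p' q' where u': "u' = of_rat p' * a + of_rat q' * b" using assms(2) unfolding Vab_def by blast
  obtain m n where vmn: "v = of_rat m * a + of_rat n * b" using v unfolding Vab_def by blast
  define d where "d = p * q' - p' * q"
  have d: "d \<noteq> 0"
  proof
    assume d0: "d = 0"
    have "complex_of_real (of_rat q') * u + complex_of_real (of_rat (- q)) * u' = of_rat d * a"
      unfolding u u' d_def by (simp add: of_real_of_rat_c of_rat_minus of_rat_diff of_rat_mult algebra_simps)
    then have "complex_of_real (of_rat q') * u + complex_of_real (of_rat (- q)) * u' = 0" using d0 by simp
    from ind[OF this] have "of_rat q' = (0::real) \<and> of_rat (- q) = (0::real)" .
    then have qq: "q = 0" "q' = 0" by auto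
    have "complex_of_real (of_rat p') * u + complex_of_real (of_rat (- p)) * u' = of_rat (- d) * b"
      unfolding u u' d_def by (simp add: of_real_of_rat_c of_rat_minus of_rat_diff of_rat_mult algebra_simps)
    then have "complex_of_real (of_rat p') * u + complex_of_real (of_rat (- p)) * u' = 0" using d0 by simp
    from ind[OF this] have "of_rat p' = (0::real) \<and> of_rat (- p) = (0::real)" .
    then have "p = 0" "p' = 0" by auto
    then have "u = 0" using u qq by simp
    then show False using ind[of 1 0] by simp
  qed
  define s where "s = (m * q' - n * p') / d"
  define t where "t = (p * n - q * m) / d"
  note e = rat_solve[OF d_def d s_def t_def]
  have "of_rat s * u + of_rat t * u' = of_rat (s * p + t * p') * a + of_rat (s * q + t * q') * b"
    unfolding u u' by (simp add: of_rat_add of_rat_mult algebra_simps)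
  then show ?thesis using e vmn by metis
qed


lemma rot:
  fixes v1 v2 :: complex
  assumes v1: "v1 \<noteq> 0" and v2: "v2 \<noteq> 0"
  shows "\<exists>\<alpha>::real. \<alpha> \<noteq> 0 \<and> csqrt ((v2/v1) / cnj (v2/v1)) * v1 = of_real \<alpha> * v2"
proof -
  define \<omega> where "\<omega> = (v2/v1) / cnj (v2/v1)"
  define \<zeta> where "\<zeta> = csqrt \<omega>"
  have z0: "v2 / v1 \<noteq> 0" using v1 v2 by simp
  have w: "\<omega> * (v1 * cnj v2) = v2 * cnj v1"
    unfolding \<omega>_def using v1 v2 by (simp add: field_simps)
  have \<omega>1: "cmod \<omega> = 1" unfolding \<omega>_def using z0 by (simp add: norm_divide norm_mult)
  have \<zeta>2: "\<zeta> ^ 2 = \<omega>" unfolding \<zeta>_def by simp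
  have \<zeta>1: "cmod \<zeta> = 1"
  proof -
    have "cmod \<zeta> ^ 2 = 1" using \<omega>1 \<zeta>2 by (metis norm_power)
    then show ?thesis using norm_ge_zero[of \<zeta>] by (auto simp: power2_eq_1_iff)
  qed
  have \<zeta>c: "cnj \<zeta> * \<zeta> = 1"
    using \<zeta>1 complex_norm_square[of \<zeta>] by (simp add: mult.commute)
  have \<zeta>0: "\<zeta> \<noteq> 0" using \<zeta>1 by auto
  define u where "u = \<zeta> * v1 / v2"
  have "cnj u = u"
  proof -
    have "cnj u = cnj \<zeta> * cnj v1 / cnj v2" unfolding u_def by simp
    also have "cnj \<zeta> = 1 / \<zeta>" using \<zeta>c \<zeta>0 by (simp add: field_simps)
    finally have cu: "cnj u = cnj v1 / (\<zeta> * cnj v2)" by simp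
    have "\<zeta> * v1 * (\<zeta> * cnj v2) = cnj v1 * v2"
    proof -
      have "\<zeta> * v1 * (\<zeta> * cnj v2) = (\<zeta> * \<zeta>) * (v1 * cnj v2)" by (simp add: algebra_simps)
      also have "\<zeta> * \<zeta> = \<omega>" using \<zeta>2 by (simp add: power2_eq_square)
      finally show ?thesis using w by (simp add: mult.commute)
    qed
    then have "cnj v1 / (\<zeta> * cnj v2) = \<zeta> * v1 / v2" using v1 v2 \<zeta>0 by (simp add: field_simps)
    then show ?thesis using cu unfolding u_def by simp
  qed
  then have "u \<in> \<real>" using Reals_cnj_iff by blast
  then obtain \<alpha> where \<alpha>: "u = of_real \<alpha>" by (auto elim: Reals_cases)
  have "u \<noteq> 0" unfolding u_def using v1 v2 \<zeta>0 by simp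
  then have "\<alpha> \<noteq> 0" using \<alpha> by simp
  moreover have "\<zeta> * v1 = of_real \<alpha> * v2" using \<alpha> v2 unfolding u_def by (simp add: field_simps)
  ultimately show ?thesis unfolding \<zeta>_def \<omega>_def by blast
qed

lemma cot_eq:
  fixes z :: complex
  assumes "z \<notin> \<real>"
  shows "\<i> * (z / cnj z + 1) / (z / cnj z - 1) = of_real (Re z / Im z)"
proof -
  have im: "Im z \<noteq> 0" using assms complex_is_Real_iff by blast
  then have c0: "cnj z \<noteq> 0" by (metis complex_cnj_zero_iff zero_complex.sel(2))
  have "z / cnj z + 1 = (z + cnj z) / cnj z" using c0 by (simp add: field_simps)
  moreover have "z / cnj z - 1 = (z - cnj z) / cnj z" using c0 by (simp add: field_simps)
  ultimately have "\<i> * (z / cnj z + 1) / (z / cnj z - 1) = \<i> * (z + cnj z) / (z - cnj z)"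
    using c0 by simp
  also have "\<dots> = \<i> * of_real (2 * Re z) / (of_real (2 * Im z) * \<i>)"
    by (simp only: complex_add_cnj complex_diff_cnj)
  also have "\<dots> = of_real (Re z / Im z)" using im by (simp add: field_simps of_real_divide)
  finally show ?thesis .
qed

lemma om_root:
  fixes z :: complex
  assumes z: "z \<noteq> 0" and q: "q \<in> \<rat>" and A: "Arg z = q * pi"
  shows "\<exists>n>0. (z / cnj z) ^ n = 1"
proof -
  obtain k l where kl: "l > 0" "q = of_int k / of_int l" using q by (elim Rats_cases') blast
  define \<theta> where "\<theta> = Arg z"
  have zr: "z = of_real (cmod z) * cis \<theta>" unfolding \<theta>_def using rcis_cmod_Arg[of z] by (simp add: rcis_def)
  have "cnj z = of_real (cmod z) * cis (- \<theta>)" by (subst zr) (simp add: cis_cnj)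
  then have "z / cnj z = cis \<theta> / cis (- \<theta>)" using z by (subst (1) zr) simp
  also have "\<dots> = cis (2 * \<theta>)" by (simp add: cis_divide)
  finally have zc: "z / cnj z = cis (2 * \<theta>)" .
  have "(z / cnj z) ^ nat l = cis (real (nat l) * (2 * \<theta>))" unfolding zc by (rule Complex.DeMoivre)
  also have "real (nat l) * (2 * \<theta>) = (2 * pi) * of_int k"
    unfolding \<theta>_def A kl(2) using kl(1) by (simp add: field_simps)
  also have "cis ((2 * pi) * of_int k) = 1" by (simp add: complex_eq_iff)
  finally show ?thesis using kl(1) by (intro exI[of _ "nat l"]) auto
qed


lemma Re_ofrat [simp]: "Re (of_rat r) = of_rat r"
  by (simp flip: of_real_of_rat_c)
lemma Im_ofrat [simp]: "Im (of_rat r) = 0"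
  by (simp flip: of_real_of_rat_c)
lemma cnj_ofrat [simp]: "cnj (of_rat r) = of_rat r"
  by (simp flip: of_real_of_rat_c)

lemma Re_ofrat_mult [simp]: "Re (of_rat r * z) = of_rat r * Re z"
  by (simp flip: of_real_of_rat_c)
lemma Im_ofrat_mult [simp]: "Im (of_rat r * z) = of_rat r * Im z"
  by (simp flip: of_real_of_rat_c)

lemma cot_span:
  fixes a b :: complex and p q r s :: rat
  assumes v10: "of_rat p * a + of_rat q * b \<noteq> 0"
    and nr: "(of_rat r * a + of_rat s * b) / (of_rat p * a + of_rat q * b) \<notin> \<real>"
  shows "complex_of_real (Re ((of_rat r * a + of_rat s * b) / (of_rat p * a + of_rat q * b)) /
            Im ((of_rat r * a + of_rat s * b) / (of_rat p * a + of_rat q * b)))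
     \<in> Qv.span {of_real (Re (a * cnj a) / Im (b * cnj a)), of_real (Re (b * cnj b) / Im (b * cnj a)),
                of_real (Re (b * cnj a) / Im (b * cnj a))}"
proof -
  define v1 where "v1 = of_rat p * a + of_rat q * b"
  define v2 where "v2 = of_rat r * a + of_rat s * b"
  define A where "A = Re (a * cnj a)"
  define B where "B = Re (b * cnj b)"
  define \<rho> where "\<rho> = Re (b * cnj a)"
  define \<sigma> where "\<sigma> = Im (b * cnj a)"
  define w where "w = v2 * cnj v1"
  define c where "c = cmod v1 ^ 2"
  have c0: "c \<noteq> 0" unfolding c_def using v10 v1_def by simp
  have "v1 * cnj v1 = of_real c" unfolding c_def by (rule complex_norm_square[symmetric])
  then have zw: "v2 / v1 = w / of_real c" unfolding w_def using v10 v1_def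
    by (metis complex_cnj_zero_iff mult_divide_mult_cancel_right)
  have ReW: "Re w = of_rat r * of_rat p * A + of_rat s * of_rat q * B + (of_rat r * of_rat q + of_rat s * of_rat p) * \<rho>"
    unfolding w_def v1_def v2_def A_def B_def \<rho>_def by (simp add: algebra_simps)
  have ImW: "Im w = (of_rat s * of_rat p - of_rat r * of_rat q) * \<sigma>"
    unfolding w_def v1_def v2_def \<sigma>_def by (simp add: algebra_simps)
  have "Im (v2 / v1) \<noteq> 0" using nr complex_is_Real_iff unfolding v1_def v2_def by blast
  then have imw: "Im w \<noteq> 0" unfolding zw using c0 by (simp add: Im_divide_of_real)
  define d where "d = s * p - r * q"
  have d0: "d \<noteq> 0" and s0: "\<sigma> \<noteq> 0" using imw unfolding ImW d_def by (auto simp: of_rat_mult[symmetric])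
  have "Re (v2 / v1) / Im (v2 / v1) = Re w / Im w" unfolding zw using c0
    by (simp add: Re_divide_of_real Im_divide_of_real)
  also have "\<dots> = of_rat (r * p / d) * (A / \<sigma>) + of_rat (s * q / d) * (B / \<sigma>) + of_rat ((r * q + s * p) / d) * (\<rho> / \<sigma>)"
  proof -
    have ImW': "Im w = of_rat d * \<sigma>" unfolding ImW d_def by (simp add: of_rat_diff of_rat_mult)
    have d0': "(of_rat d :: real) \<noteq> 0" using d0 by simp
    have "Re w / Im w = (of_rat r * of_rat p * A) / (of_rat d * \<sigma>) + (of_rat s * of_rat q * B) / (of_rat d * \<sigma>)
        + ((of_rat r * of_rat q + of_rat s * of_rat p) * \<rho>) / (of_rat d * \<sigma>)"
      unfolding ReW ImW' by (simp add: add_divide_distrib)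
    also have "\<dots> = of_rat (r * p / d) * (A / \<sigma>) + of_rat (s * q / d) * (B / \<sigma>) + of_rat ((r * q + s * p) / d) * (\<rho> / \<sigma>)"
      using d0' s0 by (simp add: of_rat_divide of_rat_mult of_rat_add)
    finally show ?thesis .
  qed
  finally have eqr: "Re (v2 / v1) / Im (v2 / v1) = of_rat (r * p / d) * (A / \<sigma>) + of_rat (s * q / d) * (B / \<sigma>) + of_rat ((r * q + s * p) / d) * (\<rho> / \<sigma>)" .
  have eq: "complex_of_real (Re (v2 / v1) / Im (v2 / v1)) =
      of_rat (r * p / d) * of_real (A / \<sigma>) + of_rat (s * q / d) * of_real (B / \<sigma>) + of_rat ((r * q + s * p) / d) * of_real (\<rho> / \<sigma>)"
    unfolding eqr by (simp only: of_real_add of_real_mult of_real_of_rat_c[symmetric])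
  show ?thesis unfolding eq[unfolded v1_def v2_def] A_def[symmetric] B_def[symmetric] \<rho>_def[symmetric] \<sigma>_def[symmetric]
    by (intro Qv.span_add Qv.span_scale Qv.span_base) auto
qed


lemma minv:
  fixes w :: complex
  assumes "w \<noteq> 1"
  shows "(\<i> * (w + 1) / (w - 1) + \<i>) / (\<i> * (w + 1) / (w - 1) - \<i>) = w"
proof -
  have w1: "w - 1 \<noteq> 0" using assms by simp
  have "\<i> * (w + 1) / (w - 1) + \<i> = 2 * \<i> * w / (w - 1)" using w1 by (simp add: field_simps)
  moreover have "\<i> * (w + 1) / (w - 1) - \<i> = 2 * \<i> / (w - 1)" using w1 by (simp add: field_simps)
  ultimately show ?thesis using w1 by simp
qed

lemma csqrt_nonreal:
  fixes z :: complex
  assumes z: "z \<noteq> 0" and ne: "z / cnj z \<noteq> 1"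
  shows "csqrt (z / cnj z) \<notin> \<real>"
proof
  assume "csqrt (z / cnj z) \<in> \<real>"
  then obtain c where c: "csqrt (z / cnj z) = of_real c" by (auto elim: Reals_cases)
  have "z / cnj z = (csqrt (z / cnj z))^2" by simp
  also have "\<dots> = of_real (c^2)" unfolding c by simp
  finally have zc: "z / cnj z = of_real (c^2)" .
  have "cmod (z / cnj z) = 1" using z by (simp add: norm_divide)
  then have "\<bar>c^2\<bar> = 1" unfolding zc by (simp only: norm_of_real)
  then have "c^2 = 1" by simp
  then show False using ne zc by simp
qed

lemma three_lines_CM:
  assumes V: "V = Vab a b"
    and mem: "v1 \<in> V" "v1' \<in> V" "v1'' \<in> V" "v2 \<in> V" "v2' \<in> V" "v2'' \<in> V"
    and nz: "v1 \<noteq> 0" "v1' \<noteq> 0" "v1'' \<noteq> 0" "v2 \<noteq> 0" "v2' \<noteq> 0" "v2'' \<noteq> 0"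
    and dist: "rline v1 \<noteq> rline v1'" "rline v1 \<noteq> rline v1''" "rline v1' \<noteq> rline v1''"
    and \<zeta>: "\<zeta> \<notin> \<real>"
    and rel: "\<zeta> * v1 = of_real \<alpha> * v2" "\<zeta> * v1' = of_real \<alpha>' * v2'" "\<zeta> * v1'' = of_real \<alpha>'' * v2''"
    and \<alpha>: "\<alpha> \<noteq> 0" "\<alpha>' \<noteq> 0" "\<alpha>'' \<noteq> 0"
  shows "is_CM V"
proof -
  have \<zeta>0: "\<zeta> \<noteq> 0" using \<zeta> by auto
  have ind1: "\<And>r s. complex_of_real r * v1 + complex_of_real s * v1' = 0 \<Longrightarrow> r = 0 \<and> s = 0"
    using rline_Rindep[OF nz(1,2) dist(1)] by blast
  have rl: "rline v2 = (\<lambda>u. \<zeta> * u) ` rline v1" "rline v2' = (\<lambda>u. \<zeta> * u) ` rline v1'"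
    using rline_mult[of \<zeta> v1] rline_mult[of \<zeta> v1'] rel(1,2) rline_scale \<alpha>(1,2) by metis+
  have injz: "inj (\<lambda>u. \<zeta> * u)" using \<zeta>0 by (simp add: inj_on_def)
  have "rline v2 \<noteq> rline v2'" unfolding rl using dist(1) injz by (simp add: inj_image_eq_iff)
  then have ind2: "\<And>r s. complex_of_real r * v2 + complex_of_real s * v2' = 0 \<Longrightarrow> r = 0 \<and> s = 0"
    using rline_Rindep[OF nz(4,5)] by blast
  obtain x y where xy: "v1'' = of_rat x * v1 + of_rat y * v1'"
    using V_basis[OF mem(1,2)[unfolded V] ind1 mem(3)[unfolded V]] by blast
  have x0: "x \<noteq> 0"
  proof
    assume "x = 0"
    then have e: "v1'' = complex_of_real (of_rat y) * v1'" using xy by (simp add: of_real_of_rat_c)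
    then have "of_rat y \<noteq> (0::real)" using nz(3) by auto
    then have "rline v1'' = rline v1'" using e rline_scale by metis
    then show False using dist(3) by simp
  qed
  have y0: "y \<noteq> 0"
  proof
    assume "y = 0"
    then have e: "v1'' = complex_of_real (of_rat x) * v1" using xy by (simp add: of_real_of_rat_c)
    then have "of_rat x \<noteq> (0::real)" using nz(3) by auto
    then have "rline v1'' = rline v1" using e rline_scale by metis
    then show False using dist(2) by simp
  qed
  obtain m n where mn: "v2'' = of_rat m * v2 + of_rat n * v2'"
    using V_basis[OF mem(4,5)[unfolded V] ind2 mem(6)[unfolded V]] by blast
  have "complex_of_real (of_rat x * \<alpha> - \<alpha>'' * of_rat m) * v2 + complex_of_real (of_rat y * \<alpha>' - \<alpha>'' * of_rat n) * v2'
        = of_rat x * (\<zeta> * v1) + of_rat y * (\<zeta> * v1') - \<zeta> * v1''"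
    unfolding rel(1,2) rel(3) mn by (simp add: of_real_of_rat_c[symmetric] algebra_simps)
  also have "\<dots> = 0" unfolding xy by (simp add: algebra_simps)
  finally have "of_rat x * \<alpha> - \<alpha>'' * of_rat m = 0 \<and> of_rat y * \<alpha>' - \<alpha>'' * of_rat n = 0" by (rule ind2)
  then have e1: "of_rat x * \<alpha> = \<alpha>'' * of_rat m" and e2: "of_rat y * \<alpha>' = \<alpha>'' * of_rat n" by auto
  have m0: "m \<noteq> 0" using e1 x0 \<alpha>(1) by auto
  define \<rho> where "\<rho> = n * x / (m * y)"
  have \<rho>: "\<alpha>' = of_rat \<rho> * \<alpha>"
  proof -
    have "of_rat \<rho> * \<alpha> = (of_rat n * of_rat x / (of_rat m * of_rat y)) * \<alpha>"
      unfolding \<rho>_def by (simp add: of_rat_divide of_rat_mult)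
    also have "\<dots> = of_rat n * (of_rat x * \<alpha>) / (of_rat m * of_rat y)" by simp
    also have "\<dots> = of_rat n * (\<alpha>'' * of_rat m) / (of_rat m * of_rat y)" using e1 by simp
    also have "\<dots> = \<alpha>'' * of_rat n / of_rat y" using m0 by (simp add: field_simps)
    also have "\<dots> = \<alpha>'" using e2 y0 by (simp add: field_simps)
    finally show ?thesis by simp
  qed
  define lam where "lam = \<zeta> / of_real \<alpha>"
  have l1: "lam * v1 = v2" unfolding lam_def using rel(1) \<alpha>(1) by (simp add: field_simps)
  have l2: "lam * v1' = of_rat \<rho> * v2'" unfolding lam_def using rel(2) \<alpha>(1) \<rho>
    by (simp add: field_simps of_real_of_rat_c[symmetric])
  have "lam \<notin> \<rat>"
  proof
    assume "lam \<in> \<rat>"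
    then obtain r where "lam = of_rat r" by (auto elim: Rats_cases)
    then have "lam \<in> \<real>" by (simp add: of_real_of_rat_c[symmetric])
    then have "lam * of_real \<alpha> \<in> \<real>" by simp
    then show False using \<zeta> \<alpha>(1) unfolding lam_def by simp
  qed
  moreover have "(\<lambda>x. lam * x) ` V \<subseteq> V"
  proof
    fix u assume "u \<in> (\<lambda>x. lam * x) ` V"
    then obtain v where v: "v \<in> V" "u = lam * v" by blast
    obtain s t where st: "v = of_rat s * v1 + of_rat t * v1'"
      using V_basis[OF mem(1,2)[unfolded V] ind1 v(1)[unfolded V]] by blast
    have "u = of_rat s * v2 + of_rat (t * \<rho>) * v2'"
    proof -
      have "u = of_rat s * (lam * v1) + of_rat t * (lam * v1')" unfolding v(2) st by (simp add: algebra_simps)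
      then show ?thesis unfolding l1 l2 by (simp add: of_rat_mult)
    qed
    then show "u \<in> V" using V_comb[OF mem(4,5)[unfolded V]] V by simp
  qed
  ultimately show ?thesis unfolding is_CM_def by blast
qed


lemma three_distinct:
  assumes "infinite S"
  obtains x y z where "x \<in> S" "y \<in> S" "z \<in> S" "x \<noteq> y" "x \<noteq> z" "y \<noteq> z"
proof -
  obtain x where x: "x \<in> S" using assms infinite_imp_nonempty by blast
  have "infinite (S - {x})" using assms by simp
  then obtain y where y: "y \<in> S - {x}" using infinite_imp_nonempty by blast
  have "infinite (S - {x, y})" using assms by simp
  then obtain z where z: "z \<in> S - {x, y}" using infinite_imp_nonempty by blast
  show ?thesis using x y z that by blast
qed

theorem theorem4p3:
  fixes V :: "complex set"
  assumes "is_space V" and "\<not> is_CM V"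
  shows "finite (rational_angles V)"
proof -
  from assms(1) obtain a b where Vd: "V = {of_rat p * a + of_rat q * b | p q. True}"
    unfolding is_space_def Q_subspace_dim2_def by blast
  have VV: "V = Vab a b" unfolding Vab_def Vd ..
  define P where "P = {(v1, v2). v1 \<in> V - {0} \<and> v2 \<in> V - {0} \<and> v2 / v1 \<notin> \<real> \<and> (\<exists>q\<in>\<rat>. Arg (v2 / v1) = q * pi)}"
  have RA: "rational_angles V = (\<lambda>(v1, v2). (rline v1, rline v2)) ` P"
    unfolding rational_angles_def P_def by auto
  define om where "om = (\<lambda>(v1::complex, v2::complex). (v2 / v1) / cnj (v2 / v1))"
  define cotm where "cotm = (\<lambda>w::complex. \<i> * (w + 1) / (w - 1))"
  define U where "U = {complex_of_real (Re (a * cnj a) / Im (b * cnj a)), complex_of_real (Re (b * cnj b) / Im (b * cnj a)),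
                complex_of_real (Re (b * cnj a) / Im (b * cnj a))}"
  have omP: "(\<exists>n>0. om x ^ n = 1) \<and> om x \<noteq> 1 \<and> cotm (om x) \<in> Qv.span U" if x: "x \<in> P" for x
  proof -
    obtain v1 v2 where x12: "x = (v1, v2)" by (cases x)
    have c: "v1 \<in> V" "v1 \<noteq> 0" "v2 \<in> V" "v2 \<noteq> 0" "v2 / v1 \<notin> \<real>" "\<exists>q\<in>\<rat>. Arg (v2 / v1) = q * pi"
      using x unfolding x12 P_def by auto
    obtain p q where v1: "v1 = of_rat p * a + of_rat q * b" using c(1) Vd by blast
    obtain r s where v2: "v2 = of_rat r * a + of_rat s * b" using c(3) Vd by blast
    define z where "z = v2 / v1"
    have z0: "z \<noteq> 0" unfolding z_def using c by simp
    have omz: "om x = z / cnj z" unfolding om_def x12 z_def by simp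
    obtain q' where q': "q' \<in> \<rat>" "Arg z = q' * pi" using c(6) unfolding z_def by blast
    have root: "\<exists>n>0. om x ^ n = 1" unfolding omz by (rule om_root[OF z0 q'])
    have ne1: "om x \<noteq> 1"
    proof
      assume "om x = 1"
      then have "z = cnj z" unfolding omz using z0 by (simp add: divide_eq_1_iff)
      then have "z \<in> \<real>" using Reals_cnj_iff by metis
      then show False using c(5) unfolding z_def by simp
    qed
    have "cotm (om x) = of_real (Re z / Im z)" unfolding cotm_def omz
      using cot_eq c(5) unfolding z_def by blast
    also have "\<dots> \<in> Qv.span U" unfolding U_def z_def v1 v2
      using cot_span[of p a q b r s] c(2,5) unfolding v1 v2 by blast
    finally show ?thesis using root ne1 by blast
  qed
  have finOm: "finite (om ` P)"
  proof -
    have "finite (cotm ` om ` P)"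
    proof (rule cot_finite[of U])
      show "finite U" unfolding U_def by simp
      show "cotm ` om ` P \<subseteq> Qv.span U" using omP by blast
      fix t assume "t \<in> cotm ` om ` P"
      then obtain x where "x \<in> P" "t = cotm (om x)" by blast
      then show "\<exists>w. (\<exists>n>0. w ^ n = 1) \<and> w \<noteq> 1 \<and> t = \<i> * (w + 1) / (w - 1)"
        using omP unfolding cotm_def by blast
    qed
    moreover have "om ` P \<subseteq> (\<lambda>t. (t + \<i>) / (t - \<i>)) ` (cotm ` om ` P)"
    proof
      fix w assume "w \<in> om ` P"
      then obtain x where x: "x \<in> P" "w = om x" by blast
      then have "w = (cotm w + \<i>) / (cotm w - \<i>)" using omP[OF x(1)] minv unfolding cotm_def by metis
      then show "w \<in> (\<lambda>t. (t + \<i>) / (t - \<i>)) ` (cotm ` om ` P)" using x by blast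
    qed
    ultimately show ?thesis by (rule finite_subset[OF _ finite_imageI, rotated])
  qed
  have rotP: "\<exists>\<alpha>::real. \<alpha> \<noteq> 0 \<and> csqrt (om (v1, v2)) * v1 = of_real \<alpha> * v2" if "(v1, v2) \<in> P" for v1 v2
    using that rot[of v1 v2] unfolding P_def om_def by auto
  have line2: "rline v2 = (\<lambda>u. csqrt (om (v1, v2)) * u) ` rline v1" if "(v1, v2) \<in> P" for v1 v2
    using rotP[OF that] rline_mult rline_scale by metis
  have zetaP: "csqrt (om x) \<notin> \<real>" if "x \<in> P" for x
  proof -
    obtain v1 v2 where x12: "x = (v1, v2)" by (cases x)
    have "v2 / v1 \<noteq> 0" using that unfolding x12 P_def by auto
    moreover have "(v2 / v1) / cnj (v2 / v1) \<noteq> 1" using omP[OF that] unfolding om_def x12 by simp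
    ultimately have "csqrt ((v2 / v1) / cnj (v2 / v1)) \<notin> \<real>" by (rule csqrt_nonreal)
    then show ?thesis unfolding x12 om_def by simp
  qed
  define Lw where "Lw = (\<lambda>\<omega>. {rline (fst x) | x. x \<in> P \<and> om x = \<omega>})"
  have finL: "finite (Lw \<omega>)" for \<omega>
  proof (rule ccontr)
    assume "infinite (Lw \<omega>)"
    then obtain L1 L2 L3 where L: "L1 \<in> Lw \<omega>" "L2 \<in> Lw \<omega>" "L3 \<in> Lw \<omega>" "L1 \<noteq> L2" "L1 \<noteq> L3" "L2 \<noteq> L3"
      by (rule three_distinct)
    obtain v1 w1 where 1: "(v1, w1) \<in> P" "om (v1, w1) = \<omega>" "L1 = rline v1" using L(1) unfolding Lw_def by auto
    obtain v2 w2 where 2: "(v2, w2) \<in> P" "om (v2, w2) = \<omega>" "L2 = rline v2" using L(2) unfolding Lw_def by auto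
    obtain v3 w3 where 3: "(v3, w3) \<in> P" "om (v3, w3) = \<omega>" "L3 = rline v3" using L(3) unfolding Lw_def by auto
    obtain \<alpha>1 where a1: "\<alpha>1 \<noteq> 0" "csqrt \<omega> * v1 = of_real \<alpha>1 * w1" using rotP[OF 1(1)] 1(2) by blast
    obtain \<alpha>2 where a2: "\<alpha>2 \<noteq> 0" "csqrt \<omega> * v2 = of_real \<alpha>2 * w2" using rotP[OF 2(1)] 2(2) by blast
    obtain \<alpha>3 where a3: "\<alpha>3 \<noteq> 0" "csqrt \<omega> * v3 = of_real \<alpha>3 * w3" using rotP[OF 3(1)] 3(2) by blast
    have "csqrt \<omega> \<notin> \<real>" using zetaP[OF 1(1)] 1(2) by simp
    have "is_CM V"
      by (rule three_lines_CM[OF VV _ _ _ _ _ _ _ _ _ _ _ _ _ _ _ \<open>csqrt \<omega> \<notin> \<real>\<close> a1(2) a2(2) a3(2) a1(1) a2(1) a3(1)])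
         (use 1 2 3 L in \<open>auto simp: P_def\<close>)
    then show False using assms(2) by simp
  qed
  have "rational_angles V \<subseteq> (\<lambda>(\<omega>, L). (L, (\<lambda>u. csqrt \<omega> * u) ` L)) ` (SIGMA \<omega>:om ` P. Lw \<omega>)"
  proof
    fix y assume "y \<in> rational_angles V"
    then obtain v1 v2 where x: "(v1, v2) \<in> P" "y = (rline v1, rline v2)" unfolding RA by auto
    have "(om (v1, v2), rline v1) \<in> (SIGMA \<omega>:om ` P. Lw \<omega>)" using x(1) unfolding Lw_def by force
    moreover have "y = (\<lambda>(\<omega>, L). (L, (\<lambda>u. csqrt \<omega> * u) ` L)) (om (v1, v2), rline v1)"
      using x line2 by simp
    ultimately show "y \<in> (\<lambda>(\<omega>, L). (L, (\<lambda>u. csqrt \<omega> * u) ` L)) ` (SIGMA \<omega>:om ` P. Lw \<omega>)" by blast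
  qed
  moreover have "finite (SIGMA \<omega>:om ` P. Lw \<omega>)" using finOm finL by (intro finite_SigmaI)
  ultimately show ?thesis by (rule finite_subset[OF _ finite_imageI])
qed

end
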